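(* Assume (A1), let $\mathsf T$ be a topological space with its Borel $\sigma$-field, and fix $\mu\in\mathcal M_1(\mathsf T)$, $\eta>0$ and $\kappa\in\mathbb R$. Assume that there is an open interval $I\ni1$ such that for every $\alpha\in I$: (D1) $\int_{\mathsf Y}\sup_{\theta}k(\theta,y)\sup_{\theta'}\big(k(\theta',y)/p(y)\big)^{\alpha-1}\nu(dy)<\infty$; (D2) $\int_{\mathsf Y}\sup_{\theta}k(\theta,y)\sup_{\theta'}\big|\log(k(\theta',y)/p(y))\big|\sup_{\theta''}\big(k(\theta'',y)/p(y)\big)^{\alpha-1}\nu(dy)<\infty$; (D3) $\int_{\mathsf Y}\inf_{\theta}k(\theta,y)\inf_{\theta'}\big(k(\theta',y)/p(y)\big)^{\alpha-1}\nu(dy)>0$ (all sup/inf over $\mathsf T$). Then for every continuous bounded $h:\mathsf T\to\mathbb R$, $\lim_{\alpha\to1}\int h\,d\mathcal I_\alpha(\mu)=\int h\,d\mathcal I_1(\mu)$, the limit being taken over $\alpha\in I\setminus\{1\}$ with $(\alpha-1)\kappa\ge0$, where $\mathcal I_1(\mu)(d\theta)=\frac{\mu(d\theta)e^{-\eta b_{\mu,1}(\theta)}}{\mu(e^{-\eta b_{\mu,1}})}$ and $b_{\mu,1}(\theta)=\int_{\mathsf Y}k(\theta,y)\log\big(\mu k(y)/p(y)\big)\nu(dy)$.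
   Context: Let $(\mathsf Y,\mathcal Y,\nu)$ be a measure space with $\nu$ $\sigma$-finite, and $(\mathsf T,\mathcal T)$ a measurable space; $\mathcal M_1(\mathsf T)$ is the set of probability measures on $\mathsf T$. Let $k:\mathsf T\times\mathsf Y\to[0,\infty)$ be measurable with $\int k(\theta,y)\nu(dy)=1$. Let $p$ be measurable positive on $\mathsf Y$. For $\mu\in\mathcal M_1(\mathsf T)$, $\mu k(y)=\int\mu(d\theta)k(\theta,y)$. For $\alpha\neq1$, $f_\alpha'(u)=\frac{u^{\alpha-1}-1}{\alpha-1}$ and $b_{\mu,\alpha}(\theta)=\int_{\mathsf Y}k(\theta,y)f_\alpha'(\mu k(y)/p(y))\nu(dy)$. Assumption (A1): $k(\theta,y)>0$, $p(y)>0$ for all $(\theta,y)$ and $\int p\,d\nu<\infty$. Power Descent one-step transition (for $\alpha\neq1$, $\eta>0$, $\kappa$ with $(\alpha-1)\kappa\ge0$): with $\Gamma_\alpha(v)=[(\alpha-1)v+1]^{\eta/(1-\alpha)}$, $\mathcal I_\alpha(\mu)(d\theta)=\frac{\mu(d\theta)\Gamma_\alpha(b_{\mu,\alpha}(\theta)+\kappa)}{\mu(\Gamma_\alpha(b_{\mu,\alpha}+\kappa))}$, where $\mu(g)=\int g\,d\mu$. *)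

theory Defs
  imports "HOL-Probability.Probability"
begin

definition muk :: "'t measure \<Rightarrow> ('t \<Rightarrow> 'y \<Rightarrow> real) \<Rightarrow> 'y \<Rightarrow> real" where
  "muk mu k y = (\<integral>\<theta>. k \<theta> y \<partial>mu)"

definition fprime :: "real \<Rightarrow> real \<Rightarrow> real" where
  "fprime \<alpha> u = (u powr (\<alpha> - 1) - 1) / (\<alpha> - 1)"

definition b_alpha :: "'y measure \<Rightarrow> ('y \<Rightarrow> real) \<Rightarrow> ('t \<Rightarrow> 'y \<Rightarrow> real)
    \<Rightarrow> 't measure \<Rightarrow> real \<Rightarrow> 't \<Rightarrow> real" where
  "b_alpha \<nu> p k mu \<alpha> \<theta> = (\<integral>y. k \<theta> y * fprime \<alpha> (muk mu k y / p y) \<partial>\<nu>)"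

definition b_one :: "'y measure \<Rightarrow> ('y \<Rightarrow> real) \<Rightarrow> ('t \<Rightarrow> 'y \<Rightarrow> real)
    \<Rightarrow> 't measure \<Rightarrow> 't \<Rightarrow> real" where
  "b_one \<nu> p k mu \<theta> = (\<integral>y. k \<theta> y * ln (muk mu k y / p y) \<partial>\<nu>)"

definition Gamma_pd :: "real \<Rightarrow> real \<Rightarrow> real \<Rightarrow> real" where
  "Gamma_pd \<eta> \<alpha> v = ((\<alpha> - 1) * v + 1) powr (\<eta> / (1 - \<alpha>))"

definition PD_step :: "'y measure \<Rightarrow> ('y \<Rightarrow> real) \<Rightarrow> ('t \<Rightarrow> 'y \<Rightarrow> real)
    \<Rightarrow> real \<Rightarrow> real \<Rightarrow> real \<Rightarrow> 't measure \<Rightarrow> 't measure" where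
  "PD_step \<nu> p k \<eta> \<kappa> \<alpha> mu =
     density mu (\<lambda>\<theta>. ennreal (Gamma_pd \<eta> \<alpha> (b_alpha \<nu> p k mu \<alpha> \<theta> + \<kappa>)
        / (\<integral>\<theta>'. Gamma_pd \<eta> \<alpha> (b_alpha \<nu> p k mu \<alpha> \<theta>' + \<kappa>) \<partial>mu)))"

definition PD_one :: "'y measure \<Rightarrow> ('y \<Rightarrow> real) \<Rightarrow> ('t \<Rightarrow> 'y \<Rightarrow> real)
    \<Rightarrow> real \<Rightarrow> 't measure \<Rightarrow> 't measure" where
  "PD_one \<nu> p k \<eta> mu =
     density mu (\<lambda>\<theta>. ennreal (exp (- \<eta> * b_one \<nu> p k mu \<theta>)
        / (\<integral>\<theta>'. exp (- \<eta> * b_one \<nu> p k mu \<theta>') \<partial>mu)))"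

end

theory Submission
  imports Defs
begin

lemma exp_sub_one_bound: "\<bar>exp x - 1\<bar> \<le> \<bar>x\<bar> * exp \<bar>x\<bar>" for x :: real
proof (cases "x \<ge> 0")
  case True
  have "exp (-x) \<ge> 1 - x" using exp_ge_add_one_self[of "-x"] by simp
  hence "exp x * exp (-x) \<ge> exp x * (1 - x)" by (intro mult_left_mono) auto
  hence "1 \<ge> exp x - x * exp x" by (simp add: exp_minus field_simps)
  moreover have "exp x \<ge> 1" using True by simp
  ultimately show ?thesis using True by (simp add: algebra_simps)
next
  case False
  have "exp x \<ge> 1 + x" using exp_ge_add_one_self[of x] by simp
  moreover have "exp x \<le> 1" using False by simp
  moreover have "exp \<bar>x\<bar> \<ge> 1" by simp
  ultimately have "\<bar>exp x - 1\<bar> \<le> \<bar>x\<bar>" using False by linarith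
  also have "\<dots> \<le> \<bar>x\<bar> * exp \<bar>x\<bar>" using \<open>exp \<bar>x\<bar> \<ge> 1\<close> by (metis abs_ge_zero mult.right_neutral mult_left_mono)
  finally show ?thesis .
qed

lemma fprime_bound:
  assumes u: "u > 0" and a1: "\<alpha> \<noteq> 1" and c: "\<bar>\<alpha> - 1\<bar> \<le> c"
  shows "\<bar>fprime \<alpha> u\<bar> \<le> \<bar>ln u\<bar> * (u powr c + u powr (-c))"
proof -
  define s where "s = \<alpha> - 1"
  have s0: "s \<noteq> 0" using a1 s_def by simp
  have "fprime \<alpha> u = (exp (s * ln u) - 1) / s"
    using u by (simp add: fprime_def powr_def s_def)
  hence "\<bar>fprime \<alpha> u\<bar> = \<bar>exp (s * ln u) - 1\<bar> / \<bar>s\<bar>" by simp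
  also have "\<dots> \<le> (\<bar>s * ln u\<bar> * exp \<bar>s * ln u\<bar>) / \<bar>s\<bar>"
    by (intro divide_right_mono exp_sub_one_bound) simp
  also have "\<dots> = \<bar>ln u\<bar> * exp (\<bar>s\<bar> * \<bar>ln u\<bar>)" using s0 by (simp add: abs_mult)
  also have "\<dots> \<le> \<bar>ln u\<bar> * exp (c * \<bar>ln u\<bar>)"
    using c s_def by (intro mult_left_mono) (auto intro: mult_right_mono)
  also have "exp (c * \<bar>ln u\<bar>) \<le> u powr c + u powr (-c)"
  proof -
    have "u powr c = exp (c * ln u)" "u powr (-c) = exp (-c * ln u)" using u by (simp_all add: powr_def)
    moreover have "exp (c * \<bar>ln u\<bar>) = exp (c * ln u) \<or> exp (c * \<bar>ln u\<bar>) = exp (-c * ln u)"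
      by (cases "ln u \<ge> 0") auto
    ultimately show ?thesis by (smt (verit) exp_gt_zero)
  qed
  hence "\<bar>ln u\<bar> * exp (c * \<bar>ln u\<bar>) \<le> \<bar>ln u\<bar> * (u powr c + u powr (-c))"
    by (intro mult_left_mono) auto
  finally show ?thesis .
qed

lemma fprime_tendsto:
  assumes u: "u > 0"
  shows "((\<lambda>\<alpha>. fprime \<alpha> u) \<longlongrightarrow> ln u) (at 1)"
proof -
  have d: "((\<lambda>s. exp (s * ln u)) has_field_derivative ln u) (at 0)"
    by (auto intro!: derivative_eq_intros)
  hence "((\<lambda>h. (exp ((0 + h) * ln u) - exp (0 * ln u)) / h) \<longlongrightarrow> ln u) (at 0)"
    by (simp add: DERIV_def)
  hence "((\<lambda>s. (exp (s * ln u) - 1) / s) \<longlongrightarrow> ln u) (at 0)" by simp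
  hence "((\<lambda>\<alpha>. (exp ((\<alpha> - 1) * ln u) - 1) / (\<alpha> - 1)) \<longlongrightarrow> ln u) (at 1)"
    using LIM_offset_zero_iff[of 1 "\<lambda>\<alpha>. (exp ((\<alpha> - 1) * ln u) - 1) / (\<alpha> - 1)"] by simp
  thus ?thesis using u by (simp add: fprime_def powr_def)
qed

lemma ln_quot_bound:
  fixes s v :: real
  assumes "\<bar>s * v\<bar> \<le> 1/2" "s \<noteq> 0"
  shows "\<bar>ln (1 + s * v) / s - v\<bar> \<le> 2 * \<bar>s\<bar> * v\<^sup>2"
proof -
  have "\<bar>ln (1 + s * v) - s * v\<bar> \<le> 2 * (s * v)\<^sup>2" by (rule abs_ln_one_plus_x_minus_x_bound) fact
  moreover have "ln (1 + s * v) / s - v = (ln (1 + s * v) - s * v) / s" using assms(2) by (simp add: field_simps)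
  ultimately have "\<bar>ln (1 + s * v) / s - v\<bar> \<le> 2 * (s * v)\<^sup>2 / \<bar>s\<bar>"
    by (simp add: divide_right_mono)
  also have "2 * (s * v)\<^sup>2 / \<bar>s\<bar> = 2 * \<bar>s\<bar> * v\<^sup>2"
  proof -
    have "(s * v)\<^sup>2 = \<bar>s\<bar> * (\<bar>s\<bar> * v\<^sup>2)" by (simp add: power2_eq_square abs_mult_self_eq mult.assoc[symmetric])
    thus ?thesis using assms(2) by simp
  qed

  finally show ?thesis .
qed

lemma Gamma_eq:
  assumes "\<bar>(\<alpha> - 1) * v\<bar> \<le> 1/2" "\<alpha> \<noteq> 1"
  shows "Gamma_pd \<eta> \<alpha> v = exp (- \<eta> * (ln (1 + (\<alpha> - 1) * v) / (\<alpha> - 1)))"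
proof -
  have "(\<alpha> - 1) * v + 1 > 0" using assms(1) by linarith
  moreover have "\<eta> / (1 - \<alpha>) = - \<eta> / (\<alpha> - 1)" using assms(2) by (simp add: field_simps)
  ultimately show ?thesis unfolding Gamma_pd_def powr_def by (simp add: add.commute)
qed

lemma Gamma_bound:
  fixes \<eta> K :: real
  assumes eta: "\<eta> > 0" and K: "K \<ge> 0" and a: "\<bar>\<alpha> - 1\<bar> \<le> 1 / (2*K+2)" "\<alpha> \<noteq> 1"
    and v: "\<bar>v\<bar> \<le> K"
  shows "0 \<le> Gamma_pd \<eta> \<alpha> v" "Gamma_pd \<eta> \<alpha> v \<le> exp (2 * \<eta> * K)"
proof -
  show "0 \<le> Gamma_pd \<eta> \<alpha> v" by (simp add: Gamma_pd_def)
  have "\<bar>(\<alpha> - 1) * v\<bar> \<le> 1/(2*K+2) * K" unfolding abs_mult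
    using a v by (intro mult_mono) auto
  also have "\<dots> \<le> 1/2" using K by (simp add: field_simps)
  finally have sv: "\<bar>(\<alpha> - 1) * v\<bar> \<le> 1/2" .
  have "\<bar>ln (1 + (\<alpha> - 1) * v) / (\<alpha> - 1) - v\<bar> \<le> 2 * \<bar>\<alpha> - 1\<bar> * v\<^sup>2"
    by (rule ln_quot_bound) (use sv a in auto)
  also have "2 * \<bar>\<alpha> - 1\<bar> * v\<^sup>2 = 2 * \<bar>(\<alpha> - 1) * v\<bar> * \<bar>v\<bar>" by (simp add: abs_mult power2_eq_square)
  also have "\<dots> \<le> 2 * (1/2) * \<bar>v\<bar>" using sv by (intro mult_right_mono) auto
  finally have "\<bar>ln (1 + (\<alpha> - 1) * v) / (\<alpha> - 1)\<bar> \<le> 2 * K" using v by linarith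
  hence "- \<eta> * (ln (1 + (\<alpha> - 1) * v) / (\<alpha> - 1)) \<le> 2 * \<eta> * K" using eta
  proof -
    have "- (ln (1 + (\<alpha> - 1) * v) / (\<alpha> - 1)) \<le> 2 * K" using \<open>\<bar>ln (1 + (\<alpha> - 1) * v) / (\<alpha> - 1)\<bar> \<le> 2 * K\<close> by linarith
    hence "\<eta> * (- (ln (1 + (\<alpha> - 1) * v) / (\<alpha> - 1))) \<le> \<eta> * (2 * K)" using eta by (intro mult_left_mono) auto
    thus ?thesis by simp
  qed
  thus "Gamma_pd \<eta> \<alpha> v \<le> exp (2 * \<eta> * K)" using Gamma_eq[OF sv a(2)] by simp
qed

lemma Gamma_tendsto:
  fixes X V :: "nat \<Rightarrow> real"
  assumes X: "X \<longlonglongrightarrow> 1" "\<And>n. X n \<noteq> 1" and V: "V \<longlonglongrightarrow> v"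
  shows "(\<lambda>n. Gamma_pd \<eta> (X n) (V n)) \<longlonglongrightarrow> exp (- \<eta> * v)"
proof -
  have s0: "(\<lambda>n. X n - 1) \<longlonglongrightarrow> 0" using X(1) by (metis LIM_zero)
  hence sv0: "(\<lambda>n. (X n - 1) * V n) \<longlonglongrightarrow> 0" using tendsto_mult[OF s0 V] by simp
  hence ev: "eventually (\<lambda>n. \<bar>(X n - 1) * V n\<bar> \<le> 1/2) sequentially"
  proof -
    have "eventually (\<lambda>n. \<bar>(X n - 1) * V n\<bar> < 1/2) sequentially"
      by (rule order_tendstoD(2)[OF tendsto_rabs_zero[OF sv0]]) simp
    thus ?thesis by eventually_elim simp
  qed
  have bnd0: "(\<lambda>n. 2 * \<bar>X n - 1\<bar> * (V n)\<^sup>2) \<longlonglongrightarrow> 2 * 0 * v\<^sup>2"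
    by (intro tendsto_intros tendsto_rabs_zero[OF s0] V)
  have "(\<lambda>n. ln (1 + (X n - 1) * V n) / (X n - 1) - V n) \<longlonglongrightarrow> 0"
  proof (rule Lim_null_comparison[OF _ bnd0[simplified]])
    show "\<forall>\<^sub>F n in sequentially. norm (ln (1 + (X n - 1) * V n) / (X n - 1) - V n) \<le> 2 * \<bar>X n - 1\<bar> * (V n)\<^sup>2"
      using ev by eventually_elim (use X(2) in \<open>auto intro!: ln_quot_bound\<close>)
  qed
  hence "(\<lambda>n. ln (1 + (X n - 1) * V n) / (X n - 1) - V n + V n) \<longlonglongrightarrow> 0 + v"
    by (intro tendsto_add V)
  hence "(\<lambda>n. exp (- \<eta> * (ln (1 + (X n - 1) * V n) / (X n - 1)))) \<longlonglongrightarrow> exp (- \<eta> * v)"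
    by (intro tendsto_intros) simp
  moreover have "eventually (\<lambda>n. exp (- \<eta> * (ln (1 + (X n - 1) * V n) / (X n - 1))) = Gamma_pd \<eta> (X n) (V n)) sequentially"
    using ev by eventually_elim (use X(2) in \<open>simp add: Gamma_eq\<close>)
  ultimately show ?thesis by (rule Lim_transform_eventually)
qed

lemma (in prob_space) exists_le_integral:
  fixes g :: "'a \<Rightarrow> real"
  assumes "integrable M g"
  shows "\<exists>x\<in>space M. g x \<le> integral\<^sup>L M g"
proof (rule ccontr)
  assume "\<not> ?thesis"
  hence pos: "\<And>x. x \<in> space M \<Longrightarrow> g x - integral\<^sup>L M g > 0" by auto
  have int: "integrable M (\<lambda>x. g x - integral\<^sup>L M g)" using assms by auto
  have "integral\<^sup>L M (\<lambda>x. g x - integral\<^sup>L M g) = 0"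
    using assms by (simp add: prob_space)
  hence "AE x in M. g x - integral\<^sup>L M g = 0"
    using integral_nonneg_eq_0_iff_AE[OF int] pos by (auto intro: less_imp_le)
  moreover have "AE x in M. g x - integral\<^sup>L M g \<noteq> 0" using pos by (intro AE_I2) force
  ultimately have "AE x in M. False" by eventually_elim auto
  thus False by (simp add: AE_False)
qed

lemma (in prob_space) exists_ge_integral:
  fixes g :: "'a \<Rightarrow> real"
  assumes "integrable M g"
  shows "\<exists>x\<in>space M. integral\<^sup>L M g \<le> g x"
  using exists_le_integral[of "\<lambda>x. - g x"] assms by auto

lemma (in prob_space) integral_sup_bounds:
  fixes g :: "'a \<Rightarrow> real"
  assumes int: "integrable M g" and pos: "\<And>x. g x > 0" and sp: "space M = UNIV"
  shows "integral\<^sup>L M g > 0"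
    "\<And>s. ennreal (integral\<^sup>L M g powr s) \<le> (\<Squnion>x. ennreal (g x powr s))"
    "ennreal \<bar>ln (integral\<^sup>L M g)\<bar> \<le> (\<Squnion>x. ennreal \<bar>ln (g x)\<bar>)"
proof -
  obtain x1 where x1: "g x1 \<le> integral\<^sup>L M g" using exists_le_integral[OF int] by auto
  obtain x2 where x2: "integral\<^sup>L M g \<le> g x2" using exists_ge_integral[OF int] by auto
  show up: "integral\<^sup>L M g > 0" using x1 pos[of x1] by linarith
  show "ennreal (integral\<^sup>L M g powr s) \<le> (\<Squnion>x. ennreal (g x powr s))" for s
  proof (cases "s \<ge> 0")
    case True
    have "integral\<^sup>L M g powr s \<le> g x2 powr s" using x2 up True by (intro powr_mono2) auto
    thus ?thesis by (intro SUP_upper2[of x2]) auto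
  next
    case False
    have "integral\<^sup>L M g powr s \<le> g x1 powr s" using x1 pos[of x1] False by (intro powr_mono2') auto
    thus ?thesis by (intro SUP_upper2[of x1]) auto
  qed
  have "ln (g x1) \<le> ln (integral\<^sup>L M g)" "ln (integral\<^sup>L M g) \<le> ln (g x2)"
    using x1 x2 up pos[of x1] by auto
  hence "\<bar>ln (integral\<^sup>L M g)\<bar> \<le> \<bar>ln (g x1)\<bar> \<or> \<bar>ln (integral\<^sup>L M g)\<bar> \<le> \<bar>ln (g x2)\<bar>" by linarith
  thus "ennreal \<bar>ln (integral\<^sup>L M g)\<bar> \<le> (\<Squnion>x. ennreal \<bar>ln (g x)\<bar>)"
  proof
    assume "\<bar>ln (integral\<^sup>L M g)\<bar> \<le> \<bar>ln (g x1)\<bar>"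
    thus ?thesis by (intro SUP_upper2[of x1]) auto
  next
    assume "\<bar>ln (integral\<^sup>L M g)\<bar> \<le> \<bar>ln (g x2)\<bar>"
    thus ?thesis by (intro SUP_upper2[of x2]) auto
  qed
qed

theorem proposition1:
  fixes \<nu> :: "'y measure" and mu :: "('t::topological_space) measure"
    and k :: "'t \<Rightarrow> 'y \<Rightarrow> real" and p :: "'y \<Rightarrow> real"
    and \<eta> \<kappa> a b :: real and h :: "'t \<Rightarrow> real"
  assumes sf: "sigma_finite_measure \<nu>"
    and k_meas: "(\<lambda>(\<theta>, y). k \<theta> y) \<in> borel_measurable (borel \<Otimes>\<^sub>M \<nu>)"
    and k_norm: "\<And>\<theta>. (\<integral>\<^sup>+ y. ennreal (k \<theta> y) \<partial>\<nu>) = 1"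
    and p_meas: "p \<in> borel_measurable \<nu>"
    and k_pos: "\<And>\<theta> y. k \<theta> y > 0"
    and p_pos: "\<And>y. p y > 0"
    and p_int: "(\<integral>\<^sup>+ y. ennreal (p y) \<partial>\<nu>) < \<infinity>"
    and mu_prob: "prob_space mu" and mu_sets: "sets mu = sets borel"
    and eta_pos: "\<eta> > 0"
    and I: "a < 1" "1 < b"
    and D1: "\<And>\<alpha>. \<alpha> \<in> {a<..<b} \<Longrightarrow>
       (\<integral>\<^sup>+ y. (\<Squnion>\<theta>. ennreal (k \<theta> y)) *
                 (\<Squnion>\<theta>'. ennreal ((k \<theta>' y / p y) powr (\<alpha> - 1))) \<partial>\<nu>) < \<infinity>"
    and D2: "\<And>\<alpha>. \<alpha> \<in> {a<..<b} \<Longrightarrow>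
       (\<integral>\<^sup>+ y. (\<Squnion>\<theta>. ennreal (k \<theta> y)) *
                 (\<Squnion>\<theta>'. ennreal \<bar>ln (k \<theta>' y / p y)\<bar>) *
                 (\<Squnion>\<theta>''. ennreal ((k \<theta>'' y / p y) powr (\<alpha> - 1))) \<partial>\<nu>) < \<infinity>"
    and D3: "\<And>\<alpha>. \<alpha> \<in> {a<..<b} \<Longrightarrow>
       (\<integral>\<^sup>+ y. (\<Sqinter>\<theta>. ennreal (k \<theta> y)) *
                 (\<Sqinter>\<theta>'. ennreal ((k \<theta>' y / p y) powr (\<alpha> - 1))) \<partial>\<nu>) > 0"
    and h_cont: "continuous_on UNIV h"
    and h_bdd: "bounded (range h)"
  shows "((\<lambda>\<alpha>. \<integral>\<theta>. h \<theta> \<partial>(PD_step \<nu> p k \<eta> \<kappa> \<alpha> mu))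
           \<longlongrightarrow> (\<integral>\<theta>. h \<theta> \<partial>(PD_one \<nu> p k \<eta> mu)))
         (at 1 within {\<alpha> \<in> {a<..<b} - {1}. (\<alpha> - 1) * \<kappa> \<ge> 0})"
proof -
  interpret nu: sigma_finite_measure \<nu> by (rule sf)
  interpret mu: prob_space mu by (rule mu_prob)
  interpret P: pair_sigma_finite mu \<nu> by unfold_locales
  have sp_mu: "space mu = UNIV" using sets_eq_imp_space_eq[OF mu_sets] by simp
  have pair_sets: "sets (mu \<Otimes>\<^sub>M \<nu>) = sets (borel \<Otimes>\<^sub>M \<nu>)"
    by (rule sets_pair_measure_cong[OF mu_sets refl])
  have km[measurable]: "(\<lambda>(\<theta>, y). k \<theta> y) \<in> borel_measurable (mu \<Otimes>\<^sub>M \<nu>)"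
    unfolding measurable_cong_sets[OF pair_sets refl] by (rule k_meas)
  have kth[measurable]: "k \<theta> \<in> borel_measurable \<nu>" for \<theta>
    using measurable_Pair2[OF km, of \<theta>] sp_mu by simp
  have h_meas[measurable]: "h \<in> borel_measurable mu"
    unfolding measurable_cong_sets[OF mu_sets refl] by (rule borel_measurable_continuous_onI[OF h_cont])
  note [measurable] = p_meas
  have muk_meas[measurable]: "muk mu k \<in> borel_measurable \<nu>"
    unfolding muk_def by (rule mu.borel_measurable_lebesgue_integral) measurable
  define u where "u y = muk mu k y / p y" for y
  have u_meas[measurable]: "u \<in> borel_measurable \<nu>" unfolding u_def by measurable
  have "(\<integral>\<^sup>+ y. (\<integral>\<^sup>+ \<theta>. ennreal (k \<theta> y) \<partial>mu) \<partial>\<nu>) = (\<integral>\<^sup>+ \<theta>. (\<integral>\<^sup>+ y. ennreal (k \<theta> y) \<partial>\<nu>) \<partial>mu)"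
    by (rule P.Fubini') measurable
  also have "\<dots> = 1" by (simp add: k_norm mu.emeasure_space_1)
  finally have "(\<integral>\<^sup>+ y. (\<integral>\<^sup>+ \<theta>. ennreal (k \<theta> y) \<partial>mu) \<partial>\<nu>) \<noteq> \<infinity>" by simp
  hence "AE y in \<nu>. (\<integral>\<^sup>+ \<theta>. ennreal (k \<theta> y) \<partial>mu) \<noteq> \<infinity>"
    by (intro nn_integral_PInf_AE) measurable
  with AE_space have AE_int: "AE y in \<nu>. integrable mu (\<lambda>\<theta>. k \<theta> y)"
  proof eventually_elim
    case (elim y)
    show ?case
    proof (rule integrableI_bounded)
      show "(\<lambda>\<theta>. k \<theta> y) \<in> borel_measurable mu" using km elim by measurable
      show "(\<integral>\<^sup>+ \<theta>. ennreal (norm (k \<theta> y)) \<partial>mu) < \<infinity>"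
        using elim k_pos by (simp add: less_top[symmetric] less_imp_le)
    qed
  qed
  have AE_u: "AE y in \<nu>. u y > 0 \<and> (\<forall>s. ennreal (u y powr s) \<le> (\<Squnion>\<theta>. ennreal ((k \<theta> y / p y) powr s)))
       \<and> ennreal \<bar>ln (u y)\<bar> \<le> (\<Squnion>\<theta>. ennreal \<bar>ln (k \<theta> y / p y)\<bar>)"
    using AE_int
  proof eventually_elim
    case (elim y)
    have int: "integrable mu (\<lambda>\<theta>. k \<theta> y / p y)" using elim by simp
    have uy: "u y = (\<integral>\<theta>. k \<theta> y / p y \<partial>mu)" unfolding u_def muk_def by simp
    have pos: "\<And>\<theta>. k \<theta> y / p y > 0" using k_pos p_pos by simp
    show ?case unfolding uy using mu.integral_sup_bounds[OF int pos sp_mu] by auto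
  qed
  define c where "c = min (1 - a) (b - 1) / 2"
  have c_pos: "c > 0" using I by (simp add: c_def)
  have c_le: "c \<le> (1 - a) / 2" "c \<le> (b - 1) / 2" by (simp_all add: c_def divide_right_mono)
  have c_in: "1 + c \<in> {a<..<b}" "1 - c \<in> {a<..<b}" using c_le c_pos I by auto
  define Sk where "Sk y = (\<Squnion>\<theta>. ennreal (k \<theta> y))" for y
  define Sl where "Sl y = (\<Squnion>\<theta>. ennreal \<bar>ln (k \<theta> y / p y)\<bar>)" for y
  define Sp where "Sp s y = (\<Squnion>\<theta>. ennreal ((k \<theta> y / p y) powr s))" for s y
  define DP where "DP = (\<integral>\<^sup>+ y. Sk y * Sl y * Sp c y \<partial>\<nu>)"
  define DM where "DM = (\<integral>\<^sup>+ y. Sk y * Sl y * Sp (-c) y \<partial>\<nu>)"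
  have DP_fin: "DP < \<infinity>" using D2[OF c_in(1)] by (simp add: DP_def Sk_def Sl_def Sp_def)
  have DM_fin: "DM < \<infinity>" using D2[OF c_in(2)] by (simp add: DM_def Sk_def Sl_def Sp_def)
  define w1 where "w1 \<theta> y = k \<theta> y * \<bar>ln (u y)\<bar> * u y powr c" for \<theta> y
  define w2 where "w2 \<theta> y = k \<theta> y * \<bar>ln (u y)\<bar> * u y powr (-c)" for \<theta> y
  define w where "w \<theta> y = w1 \<theta> y + w2 \<theta> y" for \<theta> y
  have w1_meas[measurable]: "w1 \<theta> \<in> borel_measurable \<nu>" for \<theta> unfolding w1_def by measurable
  have w2_meas[measurable]: "w2 \<theta> \<in> borel_measurable \<nu>" for \<theta> unfolding w2_def by measurable
  have w_meas[measurable]: "w \<theta> \<in> borel_measurable \<nu>" for \<theta> unfolding w_def by measurable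
  have w_nonneg: "w1 \<theta> y \<ge> 0" "w2 \<theta> y \<ge> 0" "w \<theta> y \<ge> 0" for \<theta> y
    using k_pos[of \<theta> y] by (auto simp: w1_def w2_def w_def intro!: add_nonneg_nonneg)
  have pw: "ennreal (k \<theta> y * \<bar>ln (u y)\<bar> * u y powr s) \<le> Sk y * Sl y * Sp s y"
    if "ennreal (u y powr s) \<le> Sp s y" "ennreal \<bar>ln (u y)\<bar> \<le> Sl y" for \<theta> y s
  proof -
    have "ennreal (k \<theta> y * \<bar>ln (u y)\<bar> * u y powr s) = ennreal (k \<theta> y) * ennreal \<bar>ln (u y)\<bar> * ennreal (u y powr s)"
      using k_pos[of \<theta> y] by (simp add: ennreal_mult)
    also have "\<dots> \<le> Sk y * Sl y * Sp s y"
      using that by (intro mult_mono) (auto simp: Sk_def intro: SUP_upper2)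
    finally show ?thesis .
  qed
  have w1_le: "(\<integral>\<^sup>+ y. ennreal (w1 \<theta> y) \<partial>\<nu>) \<le> DP" for \<theta>
  proof -
    have "AE y in \<nu>. ennreal (w1 \<theta> y) \<le> Sk y * Sl y * Sp c y"
      using AE_u
    proof eventually_elim
      case (elim y)
      show ?case unfolding w1_def by (rule pw) (use elim in \<open>auto simp: Sp_def Sl_def\<close>)
    qed
    thus ?thesis unfolding DP_def by (rule nn_integral_mono_AE)
  qed
  have w2_le: "(\<integral>\<^sup>+ y. ennreal (w2 \<theta> y) \<partial>\<nu>) \<le> DM" for \<theta>
  proof -
    have "AE y in \<nu>. ennreal (w2 \<theta> y) \<le> Sk y * Sl y * Sp (-c) y"
      using AE_u
    proof eventually_elim
      case (elim y)
      show ?case unfolding w2_def by (rule pw) (use elim in \<open>auto simp: Sp_def Sl_def\<close>)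
    qed
    thus ?thesis unfolding DM_def by (rule nn_integral_mono_AE)
  qed
  have w_le: "(\<integral>\<^sup>+ y. ennreal (w \<theta> y) \<partial>\<nu>) \<le> DP + DM" for \<theta>
  proof -
    have "(\<integral>\<^sup>+ y. ennreal (w \<theta> y) \<partial>\<nu>) = (\<integral>\<^sup>+ y. ennreal (w1 \<theta> y) \<partial>\<nu>) + (\<integral>\<^sup>+ y. ennreal (w2 \<theta> y) \<partial>\<nu>)"
      unfolding w_def using w_nonneg by (subst nn_integral_add[symmetric]) (auto simp: ennreal_plus)
    also have "\<dots> \<le> DP + DM" by (intro add_mono w1_le w2_le)
    finally show ?thesis .
  qed
  have DPM_fin: "DP + DM < \<infinity>" using DP_fin DM_fin by simp
  have w_int: "integrable \<nu> (w \<theta>)" for \<theta>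
  proof (rule integrableI_bounded)
    show "(\<integral>\<^sup>+ y. ennreal (norm (w \<theta> y)) \<partial>\<nu>) < \<infinity>"
      using w_le[of \<theta>] DPM_fin w_nonneg by (simp add: order.strict_trans1)
  qed measurable
  define C where "C = enn2real (DP + DM)"
  have C_nonneg: "C \<ge> 0" by (simp add: C_def)
  have w_intle: "(\<integral>y. w \<theta> y \<partial>\<nu>) \<le> C" for \<theta>
    unfolding C_def using w_nonneg w_le DPM_fin
    by (subst integral_eq_nn_integral) (auto intro!: enn2real_mono)
  have bound_by_w: "\<bar>\<integral>y. g y \<partial>\<nu>\<bar> \<le> C \<and> integrable \<nu> g"
    if g_meas: "g \<in> borel_measurable \<nu>" and g_le: "AE y in \<nu>. \<bar>g y\<bar> \<le> w \<theta> y" for g \<theta>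
  proof -
    have gi: "integrable \<nu> g"
      by (rule Bochner_Integration.integrable_bound[OF w_int g_meas]) (use g_le w_nonneg in auto)
    have "(\<integral>y. g y \<partial>\<nu>) \<le> (\<integral>y. w \<theta> y \<partial>\<nu>)"
      by (rule integral_mono_AE[OF gi w_int]) (use g_le in \<open>auto elim!: eventually_mono\<close>)
    moreover have "(\<integral>y. - g y \<partial>\<nu>) \<le> (\<integral>y. w \<theta> y \<partial>\<nu>)"
      by (rule integral_mono_AE) (use g_le gi w_int in \<open>auto elim!: eventually_mono\<close>)
    ultimately have "\<bar>\<integral>y. g y \<partial>\<nu>\<bar> \<le> (\<integral>y. w \<theta> y \<partial>\<nu>)" by simp
    thus ?thesis using w_intle[of \<theta>] gi by simp
  qed
  have b_eq: "b_alpha \<nu> p k mu \<alpha> \<theta> = (\<integral>y. k \<theta> y * fprime \<alpha> (u y) \<partial>\<nu>)" for \<alpha> \<theta>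
    by (simp add: b_alpha_def u_def)
  have b1_eq: "b_one \<nu> p k mu \<theta> = (\<integral>y. k \<theta> y * ln (u y) \<partial>\<nu>)" for \<theta>
    by (simp add: b_one_def u_def)
  have fp_meas[measurable]: "(\<lambda>y. k \<theta> y * fprime \<alpha> (u y)) \<in> borel_measurable \<nu>" for \<alpha> \<theta>
    unfolding fprime_def by measurable
  have fpb: "AE y in \<nu>. \<bar>k \<theta> y * fprime \<alpha> (u y)\<bar> \<le> w \<theta> y" if "\<alpha> \<noteq> 1" "\<bar>\<alpha> - 1\<bar> \<le> c" for \<alpha> \<theta>
    using AE_u
  proof eventually_elim
    case (elim y)
    have "\<bar>k \<theta> y * fprime \<alpha> (u y)\<bar> = k \<theta> y * \<bar>fprime \<alpha> (u y)\<bar>" using k_pos[of \<theta> y] by (simp add: abs_mult)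
    also have "\<dots> \<le> k \<theta> y * (\<bar>ln (u y)\<bar> * (u y powr c + u y powr (-c)))"
      using elim that k_pos[of \<theta> y] by (intro mult_left_mono fprime_bound) auto
    also have "\<dots> = w \<theta> y" by (simp add: w_def w1_def w2_def algebra_simps)
    finally show ?case .
  qed
  have b_bound: "\<bar>b_alpha \<nu> p k mu \<alpha> \<theta>\<bar> \<le> C" if "\<alpha> \<noteq> 1" "\<bar>\<alpha> - 1\<bar> \<le> c" for \<alpha> \<theta>
    unfolding b_eq using bound_by_w[OF fp_meas fpb[OF that]] by simp
  have l_meas[measurable]: "(\<lambda>y. k \<theta> y * ln (u y)) \<in> borel_measurable \<nu>" for \<theta> by measurable
  have lb: "AE y in \<nu>. \<bar>k \<theta> y * ln (u y)\<bar> \<le> w \<theta> y" for \<theta>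
    using AE_u
  proof eventually_elim
    case (elim y)
    have "1 \<le> u y powr c + u y powr (-c)"
    proof (cases "u y \<ge> 1")
      case True
      hence "1 \<le> u y powr c" using c_pos by (simp add: ge_one_powr_ge_zero)
      thus ?thesis by (smt (verit) powr_ge_zero)
    next
      case False
      hence "1 \<le> u y powr (-c)" using c_pos elim by (simp add: powr_minus one_le_inverse powr_le1)
      thus ?thesis by (smt (verit) powr_ge_zero)
    qed
    hence "\<bar>ln (u y)\<bar> * 1 \<le> \<bar>ln (u y)\<bar> * (u y powr c + u y powr (-c))" by (intro mult_left_mono) auto
    hence "k \<theta> y * \<bar>ln (u y)\<bar> \<le> k \<theta> y * (\<bar>ln (u y)\<bar> * (u y powr c + u y powr (-c)))"
      using k_pos[of \<theta> y] by (intro mult_left_mono) auto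
    thus ?case using k_pos[of \<theta> y] by (simp add: abs_mult w_def w1_def w2_def algebra_simps)
  qed
  have b1_bound: "\<bar>b_one \<nu> p k mu \<theta>\<bar> \<le> C" for \<theta>
    unfolding b1_eq using bound_by_w[OF l_meas lb] by simp
  define K where "K = C + \<bar>\<kappa>\<bar>"
  have K_nonneg: "K \<ge> 0" using C_nonneg by (simp add: K_def)
  define \<delta> where "\<delta> = min c (1 / (2*K+2))"
  have \<delta>_pos: "\<delta> > 0" using c_pos K_nonneg by (simp add: \<delta>_def)
  define G where "G \<alpha> \<theta> = Gamma_pd \<eta> \<alpha> (b_alpha \<nu> p k mu \<alpha> \<theta> + \<kappa>)" for \<alpha> \<theta>
  define E where "E \<theta> = exp (- \<eta> * (b_one \<nu> p k mu \<theta> + \<kappa>))" for \<theta>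
  have b_meas[measurable]: "(\<lambda>\<theta>. b_alpha \<nu> p k mu \<alpha> \<theta>) \<in> borel_measurable mu" for \<alpha>
    unfolding b_alpha_def fprime_def by measurable
  have b1_meas[measurable]: "(\<lambda>\<theta>. b_one \<nu> p k mu \<theta>) \<in> borel_measurable mu"
    unfolding b_one_def by measurable
  have G_meas[measurable]: "G \<alpha> \<in> borel_measurable mu" for \<alpha>
    unfolding G_def Gamma_pd_def by measurable
  have E_meas[measurable]: "E \<in> borel_measurable mu"
    unfolding E_def by measurable
  have G_nonneg: "G \<alpha> \<theta> \<ge> 0" for \<alpha> \<theta> by (simp add: G_def Gamma_pd_def)
  have G_bound: "G \<alpha> \<theta> \<le> exp (2 * \<eta> * K)" if "\<alpha> \<noteq> 1" "\<bar>\<alpha> - 1\<bar> \<le> \<delta>" for \<alpha> \<theta>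
  proof -
    have "\<bar>b_alpha \<nu> p k mu \<alpha> \<theta>\<bar> \<le> C" using b_bound[of \<alpha> \<theta>] that by (simp add: \<delta>_def)
    hence "\<bar>b_alpha \<nu> p k mu \<alpha> \<theta> + \<kappa>\<bar> \<le> K" by (simp add: K_def)
    thus ?thesis unfolding G_def using that
      by (intro Gamma_bound(2)[OF eta_pos K_nonneg]) (auto simp: \<delta>_def)
  qed
  have E_bound: "\<bar>E \<theta>\<bar> \<le> exp (\<eta> * K)" for \<theta>
  proof -
    have "\<bar>b_one \<nu> p k mu \<theta> + \<kappa>\<bar> \<le> K" using b1_bound[of \<theta>] by (simp add: K_def)
    hence "- (b_one \<nu> p k mu \<theta> + \<kappa>) \<le> K" by linarith
    hence "\<eta> * (- (b_one \<nu> p k mu \<theta> + \<kappa>)) \<le> \<eta> * K" using eta_pos by (intro mult_left_mono) auto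
    hence "- \<eta> * (b_one \<nu> p k mu \<theta> + \<kappa>) \<le> \<eta> * K" by (simp add: algebra_simps)
    thus ?thesis by (simp add: E_def)
  qed
  have E_int: "integrable mu E"
    by (rule mu.integrable_const_bound[where B="exp (\<eta> * K)"]) (use E_bound in auto)
  have E_pos: "E \<theta> > 0" for \<theta> by (simp add: E_def)
  have Z_pos: "(\<integral>\<theta>. E \<theta> \<partial>mu) > 0"
    using mu.exists_le_integral[OF E_int] E_pos by (meson less_le_trans)
  obtain Mh where Mh: "\<And>\<theta>. \<bar>h \<theta>\<bar> \<le> Mh" using h_bdd unfolding bounded_iff by auto
  have step_eq: "(\<integral>\<theta>. h \<theta> \<partial>PD_step \<nu> p k \<eta> \<kappa> \<alpha> mu) = (\<integral>\<theta>. G \<alpha> \<theta> * h \<theta> \<partial>mu) / (\<integral>\<theta>. G \<alpha> \<theta> \<partial>mu)" for \<alpha>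
  proof -
    have "PD_step \<nu> p k \<eta> \<kappa> \<alpha> mu = density mu (\<lambda>\<theta>. ennreal (G \<alpha> \<theta> / (\<integral>\<theta>'. G \<alpha> \<theta>' \<partial>mu)))"
      by (simp add: PD_step_def G_def)
    moreover have "(\<integral>\<theta>. h \<theta> \<partial>density mu (\<lambda>\<theta>. ennreal (G \<alpha> \<theta> / (\<integral>\<theta>'. G \<alpha> \<theta>' \<partial>mu)))) = (\<integral>\<theta>. (G \<alpha> \<theta> / (\<integral>\<theta>'. G \<alpha> \<theta>' \<partial>mu)) *\<^sub>R h \<theta> \<partial>mu)"
    proof (rule integral_density)
      show "(\<lambda>\<theta>. G \<alpha> \<theta> / (\<integral>\<theta>'. G \<alpha> \<theta>' \<partial>mu)) \<in> borel_measurable mu" by measurable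
      show "AE \<theta> in mu. 0 \<le> G \<alpha> \<theta> / (\<integral>\<theta>'. G \<alpha> \<theta>' \<partial>mu)"
        using G_nonneg by (auto intro!: divide_nonneg_nonneg integral_nonneg)
    qed (rule h_meas)
    ultimately show ?thesis by simp
  qed
  have one_eq: "(\<integral>\<theta>. h \<theta> \<partial>PD_one \<nu> p k \<eta> mu) = (\<integral>\<theta>. E \<theta> * h \<theta> \<partial>mu) / (\<integral>\<theta>. E \<theta> \<partial>mu)"
  proof -
    define E1 where "E1 \<theta> = exp (- \<eta> * b_one \<nu> p k mu \<theta>)" for \<theta>
    have [measurable]: "E1 \<in> borel_measurable mu" unfolding E1_def by measurable
    have "PD_one \<nu> p k \<eta> mu = density mu (\<lambda>\<theta>. ennreal (E1 \<theta> / (\<integral>\<theta>'. E1 \<theta>' \<partial>mu)))"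
      by (simp add: PD_one_def E1_def)
    moreover have "(\<integral>\<theta>. h \<theta> \<partial>density mu (\<lambda>\<theta>. ennreal (E1 \<theta> / (\<integral>\<theta>'. E1 \<theta>' \<partial>mu)))) = (\<integral>\<theta>. (E1 \<theta> / (\<integral>\<theta>'. E1 \<theta>' \<partial>mu)) *\<^sub>R h \<theta> \<partial>mu)"
    proof (rule integral_density)
      show "(\<lambda>\<theta>. E1 \<theta> / (\<integral>\<theta>'. E1 \<theta>' \<partial>mu)) \<in> borel_measurable mu" by measurable
      show "AE \<theta> in mu. 0 \<le> E1 \<theta> / (\<integral>\<theta>'. E1 \<theta>' \<partial>mu)"
        by (auto simp: E1_def intro!: divide_nonneg_nonneg integral_nonneg)
    qed (rule h_meas)
    ultimately have "(\<integral>\<theta>. h \<theta> \<partial>PD_one \<nu> p k \<eta> mu) = (\<integral>\<theta>. (E1 \<theta> / (\<integral>\<theta>'. E1 \<theta>' \<partial>mu)) *\<^sub>R h \<theta> \<partial>mu)" by simp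
    also have "\<dots> = (\<integral>\<theta>. E1 \<theta> * h \<theta> \<partial>mu) / (\<integral>\<theta>. E1 \<theta> \<partial>mu)" by simp
    also have "\<dots> = (exp (- \<eta> * \<kappa>) * (\<integral>\<theta>. E1 \<theta> * h \<theta> \<partial>mu)) / (exp (- \<eta> * \<kappa>) * (\<integral>\<theta>. E1 \<theta> \<partial>mu))"
      by simp
    also have "\<dots> = (\<integral>\<theta>. E \<theta> * h \<theta> \<partial>mu) / (\<integral>\<theta>. E \<theta> \<partial>mu)"
    proof -
      have "E \<theta> = exp (- \<eta> * \<kappa>) * E1 \<theta>" for \<theta>
        by (simp add: E_def E1_def exp_add[symmetric] algebra_simps)
      thus ?thesis by (simp add: mult.assoc)
    qed
    finally show ?thesis .
  qed
  show ?thesis unfolding tendsto_at_iff_sequentially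
  proof (intro allI impI)
    fix X :: "nat \<Rightarrow> real"
    assume Xin: "\<forall>i. X i \<in> {\<alpha> \<in> {a<..<b} - {1}. (\<alpha> - 1) * \<kappa> \<ge> 0} - {1}" and X: "X \<longlonglongrightarrow> 1"
    obtain N where N: "\<And>n. n \<ge> N \<Longrightarrow> \<bar>X n - 1\<bar> < \<delta>"
      using X \<delta>_pos unfolding LIMSEQ_iff by auto
    define Y where "Y n = X (n + N)" for n
    have Y: "Y \<longlonglongrightarrow> 1" unfolding Y_def by (rule LIMSEQ_ignore_initial_segment[OF X])
    have Yne: "Y n \<noteq> 1" for n using Xin by (auto simp: Y_def)
    have Yd: "\<bar>Y n - 1\<bar> \<le> \<delta>" for n using N[of "n + N"] by (simp add: Y_def)
    have Yc: "\<bar>Y n - 1\<bar> \<le> c" for n using Yd[of n] by (simp add: \<delta>_def)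
    have Yat: "filterlim Y (at 1) sequentially" using Y Yne by (auto simp: filterlim_at)
    have b_lim: "(\<lambda>n. b_alpha \<nu> p k mu (Y n) \<theta>) \<longlonglongrightarrow> b_one \<nu> p k mu \<theta>" for \<theta>
      unfolding b_eq b1_eq
    proof (rule integral_dominated_convergence[OF l_meas fp_meas w_int])
      show "AE y in \<nu>. (\<lambda>n. k \<theta> y * fprime (Y n) (u y)) \<longlonglongrightarrow> k \<theta> y * ln (u y)"
        using AE_u
      proof eventually_elim
        case (elim y)
        have "(\<lambda>n. fprime (Y n) (u y)) \<longlonglongrightarrow> ln (u y)"
          by (rule filterlim_compose[OF fprime_tendsto Yat]) (use elim in auto)
        thus ?case by (intro tendsto_mult_left)
      qed
      show "AE y in \<nu>. norm (k \<theta> y * fprime (Y n) (u y)) \<le> w \<theta> y" for n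
        using fpb[OF Yne Yc, of \<theta>] by simp
    qed
    have G_lim: "(\<lambda>n. G (Y n) \<theta>) \<longlonglongrightarrow> E \<theta>" for \<theta>
      unfolding G_def E_def by (rule Gamma_tendsto[OF Y Yne]) (intro tendsto_add b_lim tendsto_const)
    have GB: "norm (G (Y n) \<theta>) \<le> exp (2 * \<eta> * K)" for n \<theta>
      using G_bound[OF Yne Yd] G_nonneg by simp
    have Z_lim: "(\<lambda>n. \<integral>\<theta>. G (Y n) \<theta> \<partial>mu) \<longlonglongrightarrow> (\<integral>\<theta>. E \<theta> \<partial>mu)"
      by (rule integral_dominated_convergence[where w="\<lambda>_. exp (2 * \<eta> * K)"])
        (use G_lim GB in auto)
    have H_lim: "(\<lambda>n. \<integral>\<theta>. G (Y n) \<theta> * h \<theta> \<partial>mu) \<longlonglongrightarrow> (\<integral>\<theta>. E \<theta> * h \<theta> \<partial>mu)"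
    proof (rule integral_dominated_convergence[where w="\<lambda>_. exp (2 * \<eta> * K) * Mh"])
      show "AE x in mu. (\<lambda>n. G (Y n) x * h x) \<longlonglongrightarrow> E x * h x"
        using G_lim by (auto intro!: tendsto_mult_right)
      show "AE x in mu. norm (G (Y n) x * h x) \<le> exp (2 * \<eta> * K) * Mh" for n
        using GB Mh by (auto simp: abs_mult intro!: mult_mono)
    qed auto
    have "(\<lambda>n. (\<integral>\<theta>. G (Y n) \<theta> * h \<theta> \<partial>mu) / (\<integral>\<theta>. G (Y n) \<theta> \<partial>mu)) \<longlonglongrightarrow> (\<integral>\<theta>. E \<theta> * h \<theta> \<partial>mu) / (\<integral>\<theta>. E \<theta> \<partial>mu)"
      using Z_pos by (intro tendsto_divide H_lim Z_lim) auto
    hence "(\<lambda>n. ((\<lambda>\<alpha>. \<integral>\<theta>. h \<theta> \<partial>PD_step \<nu> p k \<eta> \<kappa> \<alpha> mu) \<circ> X) (n + N)) \<longlonglongrightarrow> (\<integral>\<theta>. h \<theta> \<partial>PD_one \<nu> p k \<eta> mu)"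
      by (simp add: step_eq one_eq Y_def)
    thus "((\<lambda>\<alpha>. \<integral>\<theta>. h \<theta> \<partial>PD_step \<nu> p k \<eta> \<kappa> \<alpha> mu) \<circ> X) \<longlonglongrightarrow> (\<integral>\<theta>. h \<theta> \<partial>PD_one \<nu> p k \<eta> mu)"
      by (rule LIMSEQ_offset)
  qed
qed

end
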